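(* Let $E=\mathbb{R}^n$, let $d\ge 1$ be an integer, $m\in(0,1)$, $a>0$, and let $\mu$ be a probability measure on $E$ such that for every $x\in\operatorname{supp}\mu$ and every $r<(m/a)^{1/d}$ we have $\mu(B(x,r))\ge a r^d$, where $B(x,r)$ is the open ball. Then $c(\mu):=\sup_{x\in\operatorname{supp}\mu} d_{\mu,m}(x)\le a^{-1/d} m^{1/d}$.
   Context: For a probability measure $\mu$ on $E$, $t\in[0,1)$ and $x\in E$, let $\delta_{\mu,t}(x)=\inf\{r\ge 0:\ \mu(\bar B(x,r))>t\}$, where $\bar B(x,r)$ is the closed Euclidean ball. The distance to measure (DTM) with parameter $m$ is the function $d_{\mu,m}:E\to\mathbb{R}$ defined by $d_{\mu,m}^2(x)=\frac1m\int_0^m\delta_{\mu,t}^2(x)\,dt$. *)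

theory Defs
  imports "HOL-Probability.Probability"
begin

text \<open>Support of a Borel measure on a Euclidean space: the set of points all of whose
  open neighbourhoods (balls) have positive measure, i.e. the smallest closed set of full measure.\<close>
definition msupp :: "'a::euclidean_space measure \<Rightarrow> 'a set" where
  "msupp M = {x. \<forall>r>0. 0 < emeasure M (ball x r)}"

definition dtm_delta :: "'a::euclidean_space measure \<Rightarrow> real \<Rightarrow> 'a \<Rightarrow> real" where
  "dtm_delta M t x = Inf {r. 0 \<le> r \<and> measure M (cball x r) > t}"

definition dtm :: "'a::euclidean_space measure \<Rightarrow> real \<Rightarrow> 'a \<Rightarrow> real" where
  "dtm M m x = sqrt ((1 / m) * (LBINT t=0..m. (dtm_delta M t x)\<^sup>2))"

end

theory Submission
  imports Defs
begin

theorem lemma1p4: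
  fixes M :: "'a::euclidean_space measure" and d :: nat and m a :: real
  assumes "prob_space M" and "sets M = sets borel"
    and "d \<ge> 1" and "0 < m" and "m < 1" and "0 < a"
    and "\<And>x r. x \<in> msupp M \<Longrightarrow> 0 < r \<Longrightarrow> r < (m / a) powr (1 / real d)
            \<Longrightarrow> measure M (ball x r) \<ge> a * r ^ d"
  shows "(SUP x\<in>msupp M. ereal (dtm M m x)) \<le> ereal (a powr (- 1 / real d) * m powr (1 / real d))"
proof -
  interpret prob_space M by fact
  define R where "R = (m / a) powr (1 / real d)"
  have Rpos: "R > 0" using assms unfolding R_def by simp
  have Req: "a powr (- 1 / real d) * m powr (1 / real d) = R"
    unfolding R_def using assms
    by (simp add: powr_divide powr_minus_divide divide_simps)
  have dpos: "real d > 0" using assms by simp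
  have delta: "0 \<le> dtm_delta M t x \<and> dtm_delta M t x \<le> R" if x: "x \<in> msupp M" and t: "0 < t" "t < m" for x t
  proof -
    define y where "y = (t / a + m / a) / 2"
    have ypos: "y > 0" using t assms by (simp add: y_def add_pos_pos)
    define r where "r = y powr (1 / real d)"
    have rpos: "r > 0" using ypos by (simp add: r_def)
    have ylt: "y < m / a" using t assms by (simp add: y_def divide_simps)
    have rR: "r < R" unfolding r_def R_def
      using ypos ylt dpos by (simp add: powr_less_mono2)
    have rd: "r ^ d = y" unfolding r_def using ypos dpos
      by (simp add: powr_realpow[symmetric] powr_powr)
    have "a * r ^ d > t" using rd t assms by (simp add: y_def field_simps)
    also have "a * r ^ d \<le> measure M (ball x r)" using assms(7)[OF x rpos] rR R_def by simp
    also have "measure M (ball x r) \<le> measure M (cball x r)"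
      by (rule finite_measure_mono) (auto simp: assms(2))
    finally have "r \<in> {r. 0 \<le> r \<and> measure M (cball x r) > t}" using rpos by simp
    hence mem: "r \<in> {r. 0 \<le> r \<and> measure M (cball x r) > t}" .
    hence "dtm_delta M t x \<le> r" unfolding dtm_delta_def
      by (intro cInf_lower) (auto intro: bdd_belowI[where m=0])
    moreover have "0 \<le> dtm_delta M t x" unfolding dtm_delta_def
      using mem by (intro cInf_greatest) auto
    ultimately show ?thesis using rR by simp
  qed
  have "dtm M m x \<le> R" if x: "x \<in> msupp M" for x
  proof -
    let ?f = "\<lambda>t. (dtm_delta M t x)\<^sup>2"
    have I: "(LBINT t=0..m. ?f t) \<le> m * R\<^sup>2"
    proof (cases "set_integrable lborel {0<..<m} ?f")
      case True
      have "(LBINT t=0..m. ?f t) = (LINT t:{0<..<m}|lborel. ?f t)"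
        using assms by (simp add: interval_lebesgue_integral_def einterval_def greaterThanLessThan_def greaterThan_def lessThan_def Collect_conj_eq)
      also have "\<dots> \<le> (LINT t:{0<..<m}|lborel. R\<^sup>2)"
      proof (rule set_integral_mono)
        show "set_integrable lborel {0<..<m} (\<lambda>t. R\<^sup>2)"
          by (simp add: set_integrable_def) (rule disjI2, rule integrable_real_indicator, auto simp: emeasure_lborel_Ioo less_imp_le[OF assms(4)])
        fix t assume "t \<in> {0<..<m}"
        then have "dtm_delta M t x \<le> R" "0 \<le> dtm_delta M t x" using delta x by auto
        then show "?f t \<le> R\<^sup>2" by (intro power_mono) auto
      qed fact
      also have "\<dots> = m * R\<^sup>2" using assms by (subst set_integral_const) (auto simp: less_imp_le[OF assms(4)] measure_def)
      finally show ?thesis .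
    next
      case False
      hence "(LBINT t=0..m. ?f t) = 0"
        using assms by (simp add: interval_lebesgue_integral_def einterval_def greaterThanLessThan_def greaterThan_def lessThan_def Collect_conj_eq set_lebesgue_integral_def set_integrable_def not_integrable_integral_eq)
      thus ?thesis using assms by simp
    qed
    have "dtm M m x \<le> sqrt (R\<^sup>2)" unfolding dtm_def
      using I assms by (intro real_sqrt_le_mono) (simp add: divide_simps mult.commute)
    thus ?thesis using Rpos by simp
  qed
  thus ?thesis unfolding Req by (intro SUP_least) simp
qed

end
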